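(* Let $f:\mathbb{R}^n\to\mathbb{R}$ be continuously differentiable, convex and $L$-smooth with unique minimizer $0$ and $f(0)=0$. Consider the iteration (Nesterov's method in two-sequence form), from given initial points $x_{-1},x_0\in\mathbb{R}^n$, $$y_k=x_k+b_k(x_k-x_{k-1}),\qquad x_{k+1}=y_k-s_k\nabla f(y_k),$$ with $0<s_k\le\frac1L$ and $0<b_k\le1$ for all $k$. If $$\langle x_{k+1}-2x_k+x_{k-1},\,x_k-x_{k-1}\rangle\ge0\quad\text{for all }k,$$ then $f(x_{k+1})<f(x_k)$ for all $k$.
   Context: $L$-smooth means $\nabla f$ is $L$-Lipschitz continuous. *)

theory Defs
  imports "HOL-Analysis.Analysis"
begin

end

theory Submission imports Defs begin

lemma line_deriv:
  fixes f :: "real ^ 'n \<Rightarrow> real" and gradf :: "real ^ 'n \<Rightarrow> real ^ 'n"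
  assumes grad: "\<And>z. (f has_derivative (\<lambda>h. gradf z \<bullet> h)) (at z)"
  shows "((\<lambda>t. f (y + t *\<^sub>R h)) has_real_derivative (gradf (y + t *\<^sub>R h) \<bullet> h)) (at t within S)"
proof -
  have "((\<lambda>t. y + t *\<^sub>R h) has_derivative (\<lambda>u. u *\<^sub>R h)) (at t within S)"
    by (auto intro!: derivative_eq_intros)
  from has_derivative_compose[OF this grad]
  have "((\<lambda>t. f (y + t *\<^sub>R h)) has_derivative (\<lambda>u. gradf (y + t *\<^sub>R h) \<bullet> (u *\<^sub>R h))) (at t within S)" .
  moreover have "(\<lambda>u. gradf (y + t *\<^sub>R h) \<bullet> (u *\<^sub>R h)) = (*) (gradf (y + t *\<^sub>R h) \<bullet> h)"
    by (auto simp: mult.commute)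
  ultimately show ?thesis by (simp add: has_field_derivative_def)
qed

lemma tangent:
  fixes f :: "real ^ 'n \<Rightarrow> real" and gradf :: "real ^ 'n \<Rightarrow> real ^ 'n"
  assumes grad: "\<And>z. (f has_derivative (\<lambda>h. gradf z \<bullet> h)) (at z)"
    and cvx: "convex_on UNIV f"
  shows "f z \<ge> f y + gradf y \<bullet> (z - y)"
proof -
  let ?h = "\<lambda>t. f (y + t *\<^sub>R (z - y))"
  have c: "convex_on UNIV ?h"
  proof (rule convex_onI)
    fix t a b :: real assume t: "0 < t" "t < 1"
    have e: "y + ((1 - t) *\<^sub>R a + t *\<^sub>R b) *\<^sub>R (z - y)
       = (1 - t) *\<^sub>R (y + a *\<^sub>R (z - y)) + t *\<^sub>R (y + b *\<^sub>R (z - y))"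
      by (simp add: algebra_simps)
    show "?h ((1 - t) *\<^sub>R a + t *\<^sub>R b) \<le> (1 - t) * ?h a + t * ?h b"
      unfolding e using convex_onD[OF cvx, of t] t by simp
  qed simp
  have "?h 1 - ?h 0 \<ge> (gradf (y + 0 *\<^sub>R (z - y)) \<bullet> (z - y)) * (1 - 0)"
    by (rule convex_on_imp_above_tangent[OF c]) (use line_deriv[OF grad, of y "z - y" 0 UNIV] in auto)
  then show ?thesis by simp
qed

lemma descent:
  fixes f :: "real ^ 'n \<Rightarrow> real" and gradf :: "real ^ 'n \<Rightarrow> real ^ 'n"
  assumes grad: "\<And>z. (f has_derivative (\<lambda>h. gradf z \<bullet> h)) (at z)"
    and smooth: "\<And>u v. norm (gradf u - gradf v) \<le> L * norm (u - v)"
  shows "f (y + h) \<le> f y + gradf y \<bullet> h + L / 2 * norm h ^ 2"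
proof -
  define phi where "phi t = f (y + t *\<^sub>R h) - t * (gradf y \<bullet> h) - L * t^2 * norm h ^ 2 / 2" for t
  have "phi 0 \<ge> phi 1"
  proof (rule DERIV_nonpos_imp_nonincreasing[of 0 1 phi])
    fix t :: real assume t: "0 \<le> t" "t \<le> 1"
    have d: "(phi has_real_derivative (gradf (y + t *\<^sub>R h) \<bullet> h - gradf y \<bullet> h - L * t * norm h ^ 2)) (at t)"
      unfolding phi_def
      by (rule line_deriv[OF grad] derivative_eq_intros refl | simp)+
    have "(gradf (y + t *\<^sub>R h) - gradf y) \<bullet> h \<le> norm (gradf (y + t *\<^sub>R h) - gradf y) * norm h"
      by (rule norm_cauchy_schwarz)
    also have "\<dots> \<le> L * norm (t *\<^sub>R h) * norm h"
      using smooth[of "y + t *\<^sub>R h" y] by (simp add: mult_right_mono)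
    also have "\<dots> = L * t * norm h ^ 2" using t by (simp add: power2_eq_square)
    finally show "\<exists>D. (phi has_real_derivative D) (at t) \<and> D \<le> 0"
      using d by (intro exI[of _ "gradf (y + t *\<^sub>R h) \<bullet> h - gradf y \<bullet> h - L * t * norm h ^ 2"]) (simp add: inner_diff_left)
  qed simp
  then show ?thesis by (simp add: phi_def)
qed
theorem theorem3:
  fixes f :: "real ^ 'n \<Rightarrow> real"
    and gradf :: "real ^ 'n \<Rightarrow> real ^ 'n"
    and L :: real
    and x y :: "int \<Rightarrow> real ^ 'n"
    and s b :: "int \<Rightarrow> real"
  assumes grad: "\<And>z. (f has_derivative (\<lambda>h. gradf z \<bullet> h)) (at z)"
    and C1: "continuous_on UNIV gradf"
    and cvx: "convex_on UNIV f"
    and L_pos: "L > 0"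
    and smooth: "\<And>u v. norm (gradf u - gradf v) \<le> L * norm (u - v)"
    and min0: "\<And>z. z \<noteq> 0 \<Longrightarrow> f 0 < f z"
    and f0: "f 0 = 0"
    and y_def: "\<And>k. k \<ge> 0 \<Longrightarrow> y k = x k + b k *\<^sub>R (x k - x (k - 1))"
    and x_step: "\<And>k. k \<ge> 0 \<Longrightarrow> x (k + 1) = y k - s k *\<^sub>R gradf (y k)"
    and s_bnd: "\<And>k. k \<ge> 0 \<Longrightarrow> 0 < s k \<and> s k \<le> 1 / L"
    and b_bnd: "\<And>k. k \<ge> 0 \<Longrightarrow> 0 < b k \<and> b k \<le> 1"
    and cond: "\<And>k. k \<ge> 0 \<Longrightarrow>
                 (x (k + 1) - 2 *\<^sub>R x k + x (k - 1)) \<bullet> (x k - x (k - 1)) \<ge> 0"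
  shows "\<forall>k\<ge>0. x k \<noteq> 0 \<longrightarrow> f (x (k + 1)) < f (x k)"
proof (intro allI impI)
  fix k :: int assume k: "k \<ge> 0" and xk: "x k \<noteq> 0"
  define g where "g = gradf (y k)"
  define d where "d = x k - x (k - 1)"
  define d' where "d' = x (k + 1) - x k"
  have sk: "0 < s k" "s k \<le> 1 / L" using s_bnd[OF k] by auto
  have bk: "0 < b k" "b k \<le> 1" using b_bnd[OF k] by auto
  have Ls: "L * s k \<le> 1" using sk L_pos by (simp add: field_simps)
  have xs: "x (k + 1) = y k - s k *\<^sub>R g" using x_step[OF k] g_def by simp
  have yk: "y k = x k + b k *\<^sub>R d" using y_def[OF k] d_def by simp
  have desc: "f (x (k + 1)) \<le> f (y k) + g \<bullet> (- s k *\<^sub>R g) + L / 2 * norm (- s k *\<^sub>R g) ^ 2"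
    using descent[OF grad smooth, of "y k" "- s k *\<^sub>R g"] xs g_def by simp
  have "g \<bullet> (- s k *\<^sub>R g) + L / 2 * norm (- s k *\<^sub>R g) ^ 2
      = - s k * norm g ^ 2 + (L * s k) * s k / 2 * norm g ^ 2"
    by (simp add: power2_norm_eq_inner power2_eq_square algebra_simps flip: power2_norm_eq_inner)
  also have "\<dots> \<le> - s k * norm g ^ 2 + 1 * s k / 2 * norm g ^ 2"
    using Ls sk by (intro add_left_mono mult_right_mono divide_right_mono mult_right_mono) auto
  finally have desc2: "f (x (k + 1)) \<le> f (y k) - s k / 2 * norm g ^ 2" using desc by simp
  have tan: "f (x k) \<ge> f (y k) + g \<bullet> (x k - y k)"
    using tangent[OF grad cvx] g_def by simp
  have "x k - y k = - b k *\<^sub>R d" using yk by simp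
  then have tan2: "f (x k) \<ge> f (y k) - b k * (g \<bullet> d)" using tan by simp
  have sg: "s k *\<^sub>R g = b k *\<^sub>R d - d'" proof -
    have "s k *\<^sub>R g = y k - x (k + 1)" using xs by simp
    also have "\<dots> = b k *\<^sub>R d - d'" unfolding yk d'_def by simp
    finally show ?thesis .
  qed
  have c: "(d' - d) \<bullet> d \<ge> 0" proof -
    have "x (k + 1) - 2 *\<^sub>R x k + x (k - 1) = d' - d"
      unfolding d_def d'_def by (simp add: scaleR_2 algebra_simps)
    then show ?thesis using cond[OF k] unfolding d_def by metis
  qed
  have "s k * (g \<bullet> d) = (s k *\<^sub>R g) \<bullet> d" by simp
  also have "\<dots> = b k * (d \<bullet> d) - d' \<bullet> d" unfolding sg by (simp add: inner_diff_left)
  also have "\<dots> \<le> b k * (d \<bullet> d) - d \<bullet> d" using c by (simp add: inner_diff_left)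
  also have "\<dots> = (b k - 1) * (d \<bullet> d)" by (simp add: algebra_simps)
  also have "\<dots> \<le> 0" using bk by (simp add: mult_nonpos_nonneg)
  finally have "s k * (g \<bullet> d) \<le> 0" .
  then have gd: "g \<bullet> d \<le> 0" using sk by (simp add: mult_le_0_iff)
  then have "b k * (g \<bullet> d) \<le> 0" using bk by (simp add: mult_nonneg_nonpos)
  then have main: "f (x (k + 1)) \<le> f (x k) - s k / 2 * norm g ^ 2"
    using desc2 tan2 by linarith
  show "f (x (k + 1)) < f (x k)"
  proof (cases "g = 0")
    case False
    then have "s k / 2 * norm g ^ 2 > 0" using sk by simp
    then show ?thesis using main by linarith
  next
    case True
    have "f 0 \<ge> f (y k) + g \<bullet> (0 - y k)" using tangent[OF grad cvx, of "y k" 0] unfolding g_def .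
    then have "f 0 \<ge> f (y k)" using True by simp
    then have "y k = 0" using min0[of "y k"] by fastforce
    then have "x (k + 1) = 0" using xs True by simp
    then show ?thesis using f0 min0[OF xk] by simp
  qed
qed

end
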